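(* Let $\Theta$ be a subset of a Polish space with metric $d$, and let $\{P^\theta:\theta\in\Theta\}$ be probability measures on $(\Omega,\mathcal{F})$ such that $\theta\mapsto P^\theta$ is continuous in total variation: for every $\theta\in\Theta$ and $\varepsilon>0$ there is $\delta>0$ with $\sup_{A\in\mathcal{F}}|P^\theta(A)-P^{\theta'}(A)|<\varepsilon$ whenever $d(\theta,\theta')<\delta$. Then there exists a probability measure $\mathbb{P}$ which is a countable convex combination of measures $P^\theta$, $\theta\in\Theta$, such that $P^\theta\ll\mathbb{P}$ for all $\theta\in\Theta$.
   Context: $(\Omega,\mathcal{F})$ is a measurable space. A countable convex combination means $\sum_k\lambda_kP^{\theta_k}$ with $\theta_k\in\Theta$, $\lambda_k\ge0$, $\sum_k\lambda_k=1$. *)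

theory Defs
  imports "HOL-Probability.Probability"
begin

end

theory Submission
  imports Defs
begin

theorem lemma6p8:
  fixes M :: "'a measure" and \<Theta> :: "'b::polish_space set" and P :: "'b \<Rightarrow> 'a measure"
  assumes nonempty: "\<Theta> \<noteq> {}"
    and prob: "\<And>\<theta>. \<theta> \<in> \<Theta> \<Longrightarrow> prob_space (P \<theta>)"
    and sets_P: "\<And>\<theta>. \<theta> \<in> \<Theta> \<Longrightarrow> sets (P \<theta>) = sets M"
    and tv_cont: "\<forall>\<theta>\<in>\<Theta>. \<forall>\<epsilon>>0. \<exists>\<delta>>0. \<forall>\<theta>'\<in>\<Theta>. dist \<theta> \<theta>' < \<delta> \<longrightarrow>
         (SUP A\<in>sets M. \<bar>measure (P \<theta>) A - measure (P \<theta>') A\<bar>) < \<epsilon>"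
  shows "\<exists>Q c \<theta>s. prob_space Q \<and> sets Q = sets M \<and>
           (\<forall>k. \<theta>s k \<in> \<Theta>) \<and> (\<forall>k. c k \<ge> (0::real)) \<and> c sums 1 \<and>
           (\<forall>A\<in>sets M. (\<lambda>k. c k * measure (P (\<theta>s k)) A) sums measure Q A) \<and>
           (\<forall>\<theta>\<in>\<Theta>. absolutely_continuous Q (P \<theta>))"
proof -
  obtain D where D: "countable D" "D \<subseteq> \<Theta>" "\<Theta> \<subseteq> closure D"
    using separable by blast
  have Dne: "D \<noteq> {}" using D nonempty by auto
  define \<theta>s where "\<theta>s = from_nat_into D"
  have rng: "range \<theta>s = D" unfolding \<theta>s_def using Dne D(1) by simp
  have th: "\<theta>s k \<in> \<Theta>" for k using rng D(2) by auto
  define p where "p = geometric_pmf (1/2::real)"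
  define c where "c = (\<lambda>k. pmf p k)"
  have c_eq: "c k = (1/2)^k * (1/2)" for k unfolding c_def p_def by simp
  have cpos: "c k > 0" for k unfolding c_eq by simp
  have csums: "c sums 1"
  proof -
    have "(\<lambda>k. (1/2::real)^k * (1/2)) sums (1 / (1 - 1/2) * (1/2))"
      by (intro sums_mult2 geometric_sums) simp
    then show ?thesis unfolding c_eq[abs_def] by simp
  qed
  define Q where "Q = measure_pmf p \<bind> (\<lambda>k. P (\<theta>s k))"
  have meas: "(\<lambda>k. P (\<theta>s k)) \<in> measurable (measure_pmf p) (subprob_algebra M)"
    using th by (auto simp: space_subprob_algebra sets_P intro!: prob_space_imp_subprob_space prob)
  have setsQ: "sets Q = sets M" unfolding Q_def
    by (rule sets_bind[where N=M]) (simp_all add: th sets_P)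
  have key: "(\<lambda>k. c k * measure (P (\<theta>s k)) A) sums measure Q A
      \<and> emeasure Q A = ennreal (\<Sum>k. c k * measure (P (\<theta>s k)) A)" if A: "A \<in> sets M" for A
  proof -
    let ?f = "\<lambda>k. c k * measure (P (\<theta>s k)) A"
    have fnn: "0 \<le> ?f k" for k using cpos by (simp add: less_imp_le)
    have fle: "?f k \<le> c k" for k
    proof -
      interpret prob_space "P (\<theta>s k)" using prob th by blast
      show ?thesis using cpos[of k] by (simp add: mult_left_le)
    qed
    have summ: "summable ?f"
    proof (rule summable_comparison_test)
      show "\<exists>N. \<forall>n\<ge>N. norm (?f n) \<le> c n" using fnn fle by simp
      show "summable c" using csums by (simp add: sums_iff)
    qed
    have "emeasure Q A = (\<integral>\<^sup>+k. emeasure (P (\<theta>s k)) A \<partial>measure_pmf p)"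
      unfolding Q_def by (rule emeasure_bind[OF _ meas A]) simp
    also have "\<dots> = (\<Sum>k. ennreal (?f k))"
    proof -
      have "emeasure (P (\<theta>s k)) A = ennreal (measure (P (\<theta>s k)) A)" for k
      proof -
        interpret prob_space "P (\<theta>s k)" using prob th by blast
        show ?thesis by (simp add: emeasure_eq_measure)
      qed
      then show ?thesis
        by (simp add: nn_integral_measure_pmf nn_integral_count_space_nat c_def ennreal_mult)
    qed
    also have "\<dots> = ennreal (suminf ?f)"
      using fnn summ by (intro suminf_ennreal_eq) (auto simp: summable_sums)
    finally have e: "emeasure Q A = ennreal (suminf ?f)" .
    have "measure Q A = suminf ?f"
      using e fnn summ by (simp add: measure_def suminf_nonneg)
    then show ?thesis using e summ by (simp add: summable_sums)
  qed
  have probQ: "prob_space Q"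
  proof
    have "emeasure Q (space Q) = ennreal (\<Sum>k. c k * measure (P (\<theta>s k)) (space M))"
      using key[of "space M"] sets_eq_imp_space_eq[OF setsQ] by simp
    also have "(\<lambda>k. c k * measure (P (\<theta>s k)) (space M)) = c"
    proof
      fix k
      interpret prob_space "P (\<theta>s k)" using prob th by blast
      have "space (P (\<theta>s k)) = space M" using sets_P th sets_eq_imp_space_eq by blast
      then show "c k * measure (P (\<theta>s k)) (space M) = c k" using prob_space by simp
    qed
    finally show "emeasure Q (space Q) = 1" using csums by (simp add: sums_iff)
  qed
  have ac: "absolutely_continuous Q (P \<theta>)" if \<theta>: "\<theta> \<in> \<Theta>" for \<theta>
    unfolding absolutely_continuous_def
  proof
    fix A assume "A \<in> null_sets Q"
    then have A: "A \<in> sets M" "emeasure Q A = 0" using setsQ by auto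
    let ?f = "\<lambda>k. c k * measure (P (\<theta>s k)) A"
    have fnn: "0 \<le> ?f k" for k using cpos by (simp add: less_imp_le)
    have mQ: "measure Q A = 0" using A(2) by (simp add: measure_def)
    have s: "?f sums 0" using key[OF A(1)] mQ by simp
    have s1: "summable ?f" and s2: "suminf ?f = 0" using s by (simp_all add: sums_iff)
    have z: "?f k = 0" for k
      using suminf_eq_zero_iff[OF s1] fnn s2 by blast
    have zk: "measure (P (\<theta>s k)) A = 0" for k using z[of k] cpos[of k] by simp
    interpret Pt: prob_space "P \<theta>" using prob \<theta> by blast
    have "measure (P \<theta>) A < \<epsilon>" if e: "\<epsilon> > 0" for \<epsilon>
    proof -
      obtain \<delta> where d: "\<delta> > 0" and dd: "\<forall>\<theta>'\<in>\<Theta>. dist \<theta> \<theta>' < \<delta> \<longrightarrow>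
         (SUP A\<in>sets M. \<bar>measure (P \<theta>) A - measure (P \<theta>') A\<bar>) < \<epsilon>"
        using tv_cont \<theta> e by blast
      obtain y where y: "y \<in> D" "dist \<theta> y < \<delta>"
        using closure_approachableD[of \<theta> D \<delta>] D(3) \<theta> d by blast
      obtain k where k: "\<theta>s k = y" using y(1) rng by blast
      have bdd: "bdd_above ((\<lambda>A. \<bar>measure (P \<theta>) A - measure (P y) A\<bar>) ` sets M)"
      proof (rule bdd_aboveI2[where M=1])
        fix B
        interpret Py: prob_space "P y" using prob y(1) D(2) by blast
        have "measure (P \<theta>) B \<le> 1" "measure (P y) B \<le> 1"
          "0 \<le> measure (P \<theta>) B" "0 \<le> measure (P y) B" by auto
        then show "\<bar>measure (P \<theta>) B - measure (P y) B\<bar> \<le> 1" unfolding abs_le_iff by linarith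
      qed
      have "\<bar>measure (P \<theta>) A - measure (P y) A\<bar> \<le> (SUP A\<in>sets M. \<bar>measure (P \<theta>) A - measure (P y) A\<bar>)"
        by (rule cSUP_upper[OF A(1) bdd])
      also have "\<dots> < \<epsilon>" using dd y D(2) by auto
      finally show ?thesis using zk[of k] k by simp
    qed
    then have "measure (P \<theta>) A = 0"
      using measure_nonneg[of "P \<theta>" A] by (metis less_irrefl order_le_less)
    then show "A \<in> null_sets (P \<theta>)"
      using A(1) sets_P[OF \<theta>] by (simp add: Pt.emeasure_eq_measure null_sets_def)
  qed
  show ?thesis
  proof (intro exI[of _ Q] exI[of _ c] exI[of _ \<theta>s] conjI allI ballI)
    show "\<And>k. 0 \<le> c k" using cpos less_imp_le by blast
    show "\<And>A. A \<in> sets M \<Longrightarrow> (\<lambda>k. c k * measure (P (\<theta>s k)) A) sums measure Q A"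
      using key by blast
  qed (use probQ setsQ th csums ac in blast)+
qed

end
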